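(* Let $a,b$ be coprime positive integers with $ab\ne1$. Then $$M_{a,b}(B)=\#\left\{(s,t)\in\mathbb{Z}^2:\ \begin{array}{l}\gcd(s,t)=1,\ s(s-at)\ne0,\ s/t\ne(a^2-b^2)/(2a),\\ t>0,\ 0<-Q_3(s,t),\\ 0<-Q_j(s,t)\le \lambda B/\max\{a,b\}\text{ for }j=1,2\end{array}\right\}+O(1),$$ where $\lambda=\gcd(Q_1(s,t),Q_2(s,t))$.
   Context: $M_{a,b}(B)$ is the number of $(x,y,z)\in\mathbb{N}^3$ with $(a^2-b^2)x^2+(a^2+b^2)y^2=2z^2$, $\gcd(x,y)=1$ and $\max\{a,b\}\max\{x,y\}\le B$. The binary quadratic forms are $Q_1(s,t)=2s^2+(a^2-b^2)t^2-4ast$, $Q_2(s,t)=-2s^2+(a^2-b^2)t^2$, $Q_3(s,t)=-2as^2+2(a^2-b^2)st-a(a^2-b^2)t^2$. The implied constant is absolute. *)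

theory Defs
  imports Complex_Main
begin

definition M_count :: "nat \<Rightarrow> nat \<Rightarrow> real \<Rightarrow> nat" where
  "M_count a b B = card {(x :: nat, y :: nat, z :: nat).
      0 < x \<and> 0 < y \<and> 0 < z \<and>
      (int a ^ 2 - int b ^ 2) * int x ^ 2 + (int a ^ 2 + int b ^ 2) * int y ^ 2 = 2 * int z ^ 2 \<and>
      gcd x y = 1 \<and>
      real (max a b * max x y) \<le> B}"

definition Q1 :: "int \<Rightarrow> int \<Rightarrow> int \<Rightarrow> int \<Rightarrow> int" where
  "Q1 a b s t = 2 * s ^ 2 + (a ^ 2 - b ^ 2) * t ^ 2 - 4 * a * s * t"

definition Q2 :: "int \<Rightarrow> int \<Rightarrow> int \<Rightarrow> int \<Rightarrow> int" where
  "Q2 a b s t = - 2 * s ^ 2 + (a ^ 2 - b ^ 2) * t ^ 2"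

definition Q3 :: "int \<Rightarrow> int \<Rightarrow> int \<Rightarrow> int \<Rightarrow> int" where
  "Q3 a b s t = - 2 * a * s ^ 2 + 2 * (a ^ 2 - b ^ 2) * s * t - a * (a ^ 2 - b ^ 2) * t ^ 2"

definition N_set :: "nat \<Rightarrow> nat \<Rightarrow> real \<Rightarrow> (int \<times> int) set" where
  "N_set a b B = {(s, t). gcd s t = 1 \<and> s * (s - int a * t) \<noteq> 0 \<and>
      real_of_int s / real_of_int t \<noteq> (real a ^ 2 - real b ^ 2) / (2 * real a) \<and>
      t > 0 \<and> 0 < - Q3 (int a) (int b) s t \<and>
      (let lam = gcd (Q1 (int a) (int b) s t) (Q2 (int a) (int b) s t) in
        0 < - Q1 (int a) (int b) s t \<and>
        real_of_int (- Q1 (int a) (int b) s t) \<le> real_of_int lam * B / real (max a b) \<and>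
        0 < - Q2 (int a) (int b) s t \<and>
        real_of_int (- Q2 (int a) (int b) s t) \<le> real_of_int lam * B / real (max a b))}"

end

theory Submission
  imports Defs
begin
lemma idQ: "(A^2 - B^2) * (Q1 A B s t)^2 + (A^2+B^2) * (Q2 A B s t)^2 = 2 * (Q3 A B s t)^2"
  unfolding Q1_def Q2_def Q3_def by algebra
lemma id12: "Q1 A B s t - Q2 A B s t = 4*s*(s-A*t)"
  unfolding Q1_def Q2_def Q3_def by algebra
lemma id12p: "Q1 A B s t + Q2 A B s t = 2*t*((A^2-B^2)*t - 2*A*s)"
  unfolding Q1_def Q2_def Q3_def by algebra
lemma id32: "Q3 A B s t - A * Q2 A B s t = 2*(A^2-B^2)*t*(s-A*t)"
  unfolding Q1_def Q2_def Q3_def by algebra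
lemma hom1: "Q1 A B (g*s) (g*t) = g^2 * Q1 A B s t" unfolding Q1_def by algebra
lemma hom2: "Q2 A B (g*s) (g*t) = g^2 * Q2 A B s t" unfolding Q2_def by algebra
lemma hom3: "Q3 A B (g*s) (g*t) = g^2 * Q3 A B s t" unfolding Q3_def by algebra
lemma inv1: assumes "(A^2-B^2)*X^2 + (A^2+B^2)*Y^2 = 2*Z^2"
  shows "Q1 A B ((A^2-B^2)*(X-Y)) (2*(Z-A*Y)) = 4*(A^2-B^2)*((A^2-B^2)*X+(A^2+B^2)*Y-2*A*Z)*X"
  using assms unfolding Q1_def by algebra
lemma inv2: assumes "(A^2-B^2)*X^2 + (A^2+B^2)*Y^2 = 2*Z^2"
  shows "Q2 A B ((A^2-B^2)*(X-Y)) (2*(Z-A*Y)) = 4*(A^2-B^2)*((A^2-B^2)*X+(A^2+B^2)*Y-2*A*Z)*Y"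
  using assms unfolding Q2_def by algebra
lemma inv3: assumes "(A^2-B^2)*X^2 + (A^2+B^2)*Y^2 = 2*Z^2"
  shows "Q3 A B ((A^2-B^2)*(X-Y)) (2*(Z-A*Y)) = 4*(A^2-B^2)*((A^2-B^2)*X+(A^2+B^2)*Y-2*A*Z)*Z"
  using assms unfolding Q3_def by algebra
lemma sqdvd: fixes l c :: int assumes "l^2 dvd 2*c^2" shows "l dvd c"
proof (cases "c = 0")
  case True then show ?thesis by simp
next
  case False
  define g where "g = gcd l c"
  have g0: "g \<noteq> 0" using False g_def by simp
  obtain l' where l': "l = g*l'" using g_def by (meson gcd_dvd1 dvdE)
  obtain k where k: "c = g*k" using g_def by (meson gcd_dvd2 dvdE)
  have cop: "coprime l' k" using g_def False l' k by (metis div_gcd_coprime nonzero_mult_div_cancel_left mult_zero_left)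
  have "g^2 * l'^2 dvd g^2 * (2*k^2)" using assms l' k by (simp add: power_mult_distrib mult_ac)
  hence "l'^2 dvd 2*k^2" using g0 by simp
  moreover have "coprime (l'^2) (k^2)" using cop by simp
  ultimately have "l'^2 dvd 2" using cop by (simp add: coprime_dvd_mult_left_iff)
  hence "l'^2 \<le> 2" by (simp add: zdvd_imp_le)
  have l2: "l'^2 \<le> 2" by fact
  have "\<not> 2 \<le> \<bar>l'\<bar>"
  proof
    assume "2 \<le> \<bar>l'\<bar>"
    hence "2^2 \<le> \<bar>l'\<bar>^2" by (rule power_mono) simp
    thus False using l2 by simp
  qed
  moreover have "l' \<noteq> 0" using \<open>l'^2 dvd 2\<close> by auto
  ultimately have "\<bar>l'\<bar> = 1" by linarith
  hence "l' dvd 1" by (metis abs_dvd_iff dvd_refl)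
  hence "l' dvd k" using dvd_trans one_dvd by blast
  thus ?thesis using l' k by (simp add: mult_dvd_mono)
qed
lemma copr_eq: fixes s t s' t' :: int
  assumes "coprime s t" "coprime s' t'" "t>0" "t'>0" "s*t' = s'*t" shows "s=s' \<and> t=t'"
proof -
  have "t dvd s*t'" using assms(5) by simp
  hence "t dvd t'" using assms(1) by (metis coprime_commute coprime_dvd_mult_right_iff)
  moreover have "t' dvd s'*t" using assms(5) by (metis dvd_triv_right)
  hence "t' dvd t" using assms(2) by (metis coprime_commute coprime_dvd_mult_right_iff)
  ultimately have "t = t'" using assms by (simp add: zdvd_antisym_nonneg)
  thus ?thesis using assms by simp
qed
lemma dvd_both: fixes k c X Y :: int assumes "k dvd c*X" "k dvd c*Y" "coprime X Y" shows "k dvd c"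
proof -
  have "k dvd gcd (c*X) (c*Y)" using assms by simp
  also have "gcd (c*X) (c*Y) = \<bar>c\<bar>" using assms(3) by (simp flip: gcd_mult_distrib_int)
  finally show ?thesis by simp
qed
lemma sgnW: fixes A Bq X Y Z d e :: int
  assumes d: "d = A^2-Bq^2" and e: "e = A^2+Bq^2" and A: "A>0" and d0: "d\<noteq>0"
   and X: "X>0" and Y: "Y>0" and Z: "Z>0" and XY: "X\<noteq>Y" and eq: "d*X^2+e*Y^2=2*Z^2"
  shows "d*(d*X+e*Y-2*A*Z) < 0"
proof -
  have iden: "(d*X+e*Y)^2 = (2*A*Z)^2 - d*e*(X-Y)^2"
  proof -
    have "(2*A*Z)^2 = 2*A^2*(2*Z^2)" by (simp add: power_mult_distrib)
    also have "\<dots> = (d+e)*(d*X^2+e*Y^2)" using eq d e by simp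
    finally show ?thesis by (simp add: power2_eq_square algebra_simps)
  qed
  have e0: "e > 0" using e A by (simp add: add_pos_nonneg)
  have sq: "(X-Y)^2 > 0" using XY by simp
  have AZ: "2*A*Z > 0" using A Z by simp
  show ?thesis
  proof (cases "d > 0")
    case True
    have "d*e*(X-Y)^2 > 0" using True e0 sq by simp
    hence "(d*X+e*Y)^2 < (2*A*Z)^2" using iden by simp
    hence "d*X+e*Y < 2*A*Z" using AZ by (meson power_less_imp_less_base less_imp_le)
    thus ?thesis using True by (simp add: mult_pos_neg)
  next
    case False
    hence dn: "d < 0" using d0 by simp
    have ed: "e + d > 0" using d e A by simp
    have pos: "d*X+e*Y > 0"
    proof (rule ccontr)
      assume "\<not> ?thesis"
      hence h: "e*Y \<le> -d*X" by simp
      have "e*Y^2 > -d*X^2" proof -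
        have "Z^2 > 0" using Z by simp
        thus ?thesis using eq by linarith
      qed
      moreover have "e*Y^2 \<le> -d*X*Y" using h Y by (metis mult_right_mono less_imp_le power2_eq_square mult.assoc)
      ultimately have "-d*X*X < -d*X*Y" by (simp add: power2_eq_square)
      hence "(-d*X)*X < (-d*X)*Y" by (simp add: mult.assoc)
      moreover have "-d*X > 0" using dn X by (simp add: mult_neg_pos)
      ultimately have XlY: "X < Y" using mult_less_cancel_left_pos[of "-d*X" X Y] by blast
      have "-d < e" using ed by linarith
      hence "-d*Y < e*Y" using Y by (rule mult_strict_right_mono)
      hence "-d*Y < -d*X" using h by linarith
      moreover have "-d > 0" using dn by simp
      ultimately have "Y < X" using mult_less_cancel_left_pos[of "-d" Y X] by blast
      thus False using XlY by simp
    qed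
    have "d*e*(X-Y)^2 < 0" using dn e0 sq by (simp add: mult_neg_pos)
    hence "(d*X+e*Y)^2 > (2*A*Z)^2" using iden by simp
    hence "d*X+e*Y > 2*A*Z" using pos by (meson power_less_imp_less_base less_imp_le)
    thus ?thesis using dn by (simp add: mult_neg_pos)
  qed
qed
lemma fwd_core: fixes A Bq s t :: int
  defines "l \<equiv> gcd (Q1 A Bq s t) (Q2 A Bq s t)"
  assumes q1: "Q1 A Bq s t < 0" and q2: "Q2 A Bq s t < 0" and q3: "Q3 A Bq s t < 0"
  shows "l > 0 \<and> - Q1 A Bq s t = l * (- Q1 A Bq s t div l) \<and> - Q2 A Bq s t = l * (- Q2 A Bq s t div l)
     \<and> - Q3 A Bq s t = l * (- Q3 A Bq s t div l) \<and> coprime (- Q1 A Bq s t div l) (- Q2 A Bq s t div l)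
     \<and> - Q1 A Bq s t div l > 0 \<and> - Q2 A Bq s t div l > 0 \<and> - Q3 A Bq s t div l > 0
     \<and> (A^2-Bq^2)*(- Q1 A Bq s t div l)^2 + (A^2+Bq^2)*(- Q2 A Bq s t div l)^2 = 2*(- Q3 A Bq s t div l)^2"
proof -
  define X where "X = - Q1 A Bq s t div l"
  define Y where "Y = - Q2 A Bq s t div l"
  have l0: "l > 0" using q1 l_def by simp
  have dX: "- Q1 A Bq s t = l * X" using l_def X_def by simp
  have dY: "- Q2 A Bq s t = l * Y" using l_def Y_def by simp
  have cop: "coprime X Y"
  proof -
    have "coprime (Q1 A Bq s t div l) (Q2 A Bq s t div l)" unfolding l_def using q1
      by (intro div_gcd_coprime) simp
    moreover have "X = - (Q1 A Bq s t div l)" "Y = - (Q2 A Bq s t div l)"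
      using X_def Y_def l_def by (simp_all add: dvd_neg_div)
    ultimately show ?thesis by simp
  qed
  have idq: "(A^2-Bq^2)*(Q1 A Bq s t)^2 + (A^2+Bq^2)*(Q2 A Bq s t)^2 = 2*(Q3 A Bq s t)^2" by (rule idQ)
  hence e1: "l^2 * ((A^2-Bq^2)*X^2 + (A^2+Bq^2)*Y^2) = 2*(Q3 A Bq s t)^2"
  proof -
    have "(Q1 A Bq s t)^2 = l^2*X^2" "(Q2 A Bq s t)^2 = l^2*Y^2"
      using dX dY by (metis minus_equation_iff power2_minus power_mult_distrib)+
    thus ?thesis using idq by (simp add: algebra_simps)
  qed
  hence "l^2 dvd 2*(Q3 A Bq s t)^2" by (metis dvd_triv_left)
  hence ld: "l dvd Q3 A Bq s t" by (rule sqdvd)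
  define Z where "Z = - Q3 A Bq s t div l"
  have dZ: "- Q3 A Bq s t = l * Z" using ld Z_def by simp
  have "(Q3 A Bq s t)^2 = l^2*Z^2" using dZ by (metis minus_equation_iff power2_minus power_mult_distrib)
  hence "l^2 * ((A^2-Bq^2)*X^2 + (A^2+Bq^2)*Y^2) = l^2 * (2*Z^2)" using e1 by simp
  hence eq: "(A^2-Bq^2)*X^2 + (A^2+Bq^2)*Y^2 = 2*Z^2" using l0 by simp
  have p1: "0 < l*X" using dX q1 by linarith
  have p2: "0 < l*Y" using dY q2 by linarith
  have p3: "0 < l*Z" using dZ q3 by linarith
  have pos: "X > 0" "Y > 0" "Z > 0" using l0 p1 p2 p3 by (simp_all add: zero_less_mult_iff)
  show ?thesis unfolding X_def[symmetric] Y_def[symmetric] Z_def[symmetric]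
    using l0 dX dY dZ cop eq pos by blast
qed

lemma inj_core: fixes A Bq s t s' t' X Y Z l l' :: int
  assumes d0: "A^2-Bq^2 \<noteq> 0" and cst: "coprime s t" "coprime s' t'" and tp: "t>0" "t'>0"
   and u: "s - A*t \<noteq> 0" "s' - A*t' \<noteq> 0"
   and h1: "- Q1 A Bq s t = l*X" "- Q2 A Bq s t = l*Y" "- Q3 A Bq s t = l*Z"
   and h2: "- Q1 A Bq s' t' = l'*X" "- Q2 A Bq s' t' = l'*Y" "- Q3 A Bq s' t' = l'*Z"
   and XY: "X \<noteq> Y"
  shows "s = s' \<and> t = t'"
proof -
  define d where "d = A^2-Bq^2"
  have key: "2*s*(Z-A*Y) = d*t*(X-Y)"
    if c: "coprime s t" "s - A*t \<noteq> 0" "- Q1 A Bq s t = l*X" "- Q2 A Bq s t = l*Y" "- Q3 A Bq s t = l*Z"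
    for s t l
  proof -
    have a1: "4*s*(s-A*t) = - l*(X-Y)" using id12[of A Bq s t] c by (simp add: algebra_simps)
    have q23: "Q3 A Bq s t = -(l*Z)" "Q2 A Bq s t = -(l*Y)" using c by linarith+
    have "2*d*t*(s-A*t) = Q3 A Bq s t - A * Q2 A Bq s t" using id32[of A Bq s t] d_def by simp
    also have "\<dots> = - l*(Z-A*Y)" using q23 by (simp add: algebra_simps)
    finally have a2: "2*d*t*(s-A*t) = - l*(Z-A*Y)" .
    have "(4*s*(s-A*t))*(Z-A*Y) = (- l*(X-Y))*(Z-A*Y)" by (simp only: a1)
    also have "\<dots> = (- l*(Z-A*Y))*(X-Y)" by (simp add: algebra_simps)
    also have "\<dots> = (2*d*t*(s-A*t))*(X-Y)" by (simp only: a2)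
    finally have "(4*s*(s-A*t))*(Z-A*Y) = (2*d*t*(s-A*t))*(X-Y)" .
    hence "(s-A*t) * (2 * (2*s*(Z-A*Y))) = (s-A*t) * (2 * (d*t*(X-Y)))" by (simp add: algebra_simps)
    thus ?thesis using c(2) by simp
  qed
  have k1: "2*s*(Z-A*Y) = d*t*(X-Y)" using key cst tp u h1 by blast
  have k2: "2*s'*(Z-A*Y) = d*t'*(X-Y)" using key cst tp u h2 by blast
  have "(d*(X-Y)) * (s*t') = (d*(X-Y)) * (s'*t)"
  proof -
    have "(d*(X-Y)) * (s*t') = s*(d*t'*(X-Y))" by (simp add: algebra_simps)
    also have "\<dots> = s*(2*s'*(Z-A*Y))" using k2 by simp
    also have "\<dots> = s'*(2*s*(Z-A*Y))" by (simp add: algebra_simps)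
    also have "\<dots> = s'*(d*t*(X-Y))" using k1 by simp
    finally show ?thesis by (simp add: algebra_simps)
  qed
  hence "s*t' = s'*t" using d0 XY d_def by simp
  thus ?thesis using copr_eq cst tp by blast
qed
lemma bwd_core: fixes A Bq X Y Z :: int
  assumes A: "A>0" and d0: "A^2-Bq^2 \<noteq> 0" and X: "X>0" and Y: "Y>0" and Z: "Z>0"
    and cop: "coprime X Y" and XY: "X \<noteq> Y"
    and eq: "(A^2-Bq^2)*X^2 + (A^2+Bq^2)*Y^2 = 2*Z^2"
  shows "\<exists>s t m. coprime s t \<and> t > 0 \<and> m > 0 \<and> - Q1 A Bq s t = m*X \<and> - Q2 A Bq s t = m*Y
      \<and> - Q3 A Bq s t = m*Z"
proof -
  define d where "d = A^2-Bq^2"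
  define e where "e = A^2+Bq^2"
  define c where "c = -4*d*(d*X+e*Y-2*A*Z)"
  have c0: "c > 0" using sgnW[OF d_def e_def A d0[folded d_def] X Y Z XY eq[folded d_def e_def]] c_def by simp
  have ZA: "Z - A*Y \<noteq> 0"
  proof
    assume "Z - A*Y = 0"
    hence "Z = A*Y" by simp
    hence "d*X^2 + e*Y^2 = 2*A^2*Y^2" using eq d_def e_def by (simp add: power_mult_distrib)
    moreover have ee: "e = 2*A^2 - d" using d_def e_def by simp
    moreover have "d*X^2 - d*Y^2 = (d*X^2 + e*Y^2) - 2*A^2*Y^2" unfolding ee by (simp add: algebra_simps)
    ultimately have "d*X^2 = d*Y^2" by linarith
    moreover have "d \<noteq> 0" using d0 d_def by simp
    ultimately have "X^2 = Y^2" by simp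
    hence "X = Y" using X Y by (simp add: power2_eq_iff_nonneg)
    thus False using XY by simp
  qed
  have i1: "Q1 A Bq (d*(X-Y)) (2*(Z-A*Y)) = -c*X" proof -
    have "-c*X = 4*(A^2-Bq^2)*((A^2-Bq^2)*X+(A^2+Bq^2)*Y-2*A*Z)*X" unfolding c_def d_def e_def by algebra
    thus ?thesis using inv1[OF eq] unfolding d_def by simp
  qed
  have i2: "Q2 A Bq (d*(X-Y)) (2*(Z-A*Y)) = -c*Y" proof -
    have "-c*Y = 4*(A^2-Bq^2)*((A^2-Bq^2)*X+(A^2+Bq^2)*Y-2*A*Z)*Y" unfolding c_def d_def e_def by algebra
    thus ?thesis using inv2[OF eq] unfolding d_def by simp
  qed
  have i3: "Q3 A Bq (d*(X-Y)) (2*(Z-A*Y)) = -c*Z" proof -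
    have "-c*Z = 4*(A^2-Bq^2)*((A^2-Bq^2)*X+(A^2+Bq^2)*Y-2*A*Z)*Z" unfolding c_def d_def e_def by algebra
    thus ?thesis using inv3[OF eq] unfolding d_def by simp
  qed
  obtain s0 t0 where t0: "t0 > 0" and qs: "Q1 A Bq s0 t0 = -c*X" "Q2 A Bq s0 t0 = -c*Y" "Q3 A Bq s0 t0 = -c*Z"
  proof (cases "Z - A*Y > 0")
    case True
    show ?thesis
      apply (rule that[of "2*(Z-A*Y)" "d*(X-Y)"])
      using True i1 i2 i3 by simp_all
  next
    case False
    hence F: "(-1)*(2*(Z-A*Y)) > 0" using ZA by simp
    show ?thesis
      apply (rule that[of "(-1)*(2*(Z-A*Y))" "(-1)*(d*(X-Y))"])
      using F i1 i2 i3 by (simp_all only: hom1 hom2 hom3) simp_all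
  qed
  define g where "g = gcd s0 t0"
  have g0: "g > 0" using t0 g_def by simp
  define s where "s = s0 div g"
  define t where "t = t0 div g"
  have s0e: "s0 = g*s" using s_def g_def by simp
  have t0e: "t0 = g*t" using t_def g_def by simp
  have cst: "coprime s t" using s_def t_def g_def t0 by (simp add: div_gcd_coprime)
  have tp: "t > 0" using t0 t0e g0 by (simp add: zero_less_mult_iff)
  have r1: "g^2 * Q1 A Bq s t = -c*X" using qs hom1[of A Bq g s t] s0e t0e by simp
  have r2: "g^2 * Q2 A Bq s t = -c*Y" using qs hom2[of A Bq g s t] s0e t0e by simp
  have r3: "g^2 * Q3 A Bq s t = -c*Z" using qs hom3[of A Bq g s t] s0e t0e by simp
  have "g^2 dvd c*X" using r1 by (metis dvd_minus_iff dvd_triv_left mult_minus_left)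
  moreover have "g^2 dvd c*Y" using r2 by (metis dvd_minus_iff dvd_triv_left mult_minus_left)
  ultimately have "g^2 dvd c" using dvd_both cop by blast
  then obtain m where m: "c = g^2 * m" by blast
  have m0: "m > 0" using c0 m g0 by (simp add: zero_less_mult_iff)
  have g2: "g^2 \<noteq> 0" using g0 by simp
  have "g^2 * (- Q1 A Bq s t) = g^2 * (m*X)" using r1 m by simp
  hence e1: "- Q1 A Bq s t = m*X" using g2 by (metis mult_left_cancel)
  have "g^2 * (- Q2 A Bq s t) = g^2 * (m*Y)" using r2 m by simp
  hence e2: "- Q2 A Bq s t = m*Y" using g2 by (metis mult_left_cancel)
  have "g^2 * (- Q3 A Bq s t) = g^2 * (m*Z)" using r3 m by simp
  hence e3: "- Q3 A Bq s t = m*Z" using g2 by (metis mult_left_cancel)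
  show ?thesis using cst tp m0 e1 e2 e3 by blast
qed
lemma card_diff1: "\<bar>real (card A) - real (card (A - {p}))\<bar> \<le> 1"
proof (cases "finite A")
  case True thus ?thesis
    by (cases "p \<in> A") (auto simp: card_Diff_singleton_if card_gt_0_iff of_nat_diff Suc_le_eq)
next
  case False
  hence "infinite (A - {p})" by simp
  thus ?thesis using False by simp
qed

lemma bnd: fixes m X :: int and M :: nat and B :: real assumes "m > 0" "M > 0"
  shows "(real_of_int (m*X) \<le> real_of_int m * B / real M) = (real M * real_of_int X \<le> B)"
proof -
  have "(real_of_int (m*X) \<le> real_of_int m * B / real M) = (real_of_int m * (real_of_int X * real M) \<le> real_of_int m * B)"
    using assms by (simp add: pos_le_divide_eq mult.assoc)
  also have "\<dots> = (real_of_int X * real M \<le> B)" using assms by simp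
  finally show ?thesis by (simp add: mult.commute)
qed

lemma bnd2: fixes M x y :: nat and B :: real
  shows "(real (M * max x y) \<le> B) = (real M * real x \<le> B \<and> real M * real y \<le> B)"
proof (cases "x \<le> y")
  case True
  have "real M * real x \<le> real M * real y" using True by (simp add: mult_left_mono)
  thus ?thesis using True by (auto simp: max_def)
next
  case False
  have "real M * real y \<le> real M * real x" using False by (simp add: mult_left_mono)
  thus ?thesis using False by (auto simp: max_def)
qed
definition Mset :: "nat \<Rightarrow> nat \<Rightarrow> real \<Rightarrow> (nat \<times> nat \<times> nat) set" where
  "Mset a b B = {(x :: nat, y :: nat, z :: nat).
      0 < x \<and> 0 < y \<and> 0 < z \<and>
      (int a ^ 2 - int b ^ 2) * int x ^ 2 + (int a ^ 2 + int b ^ 2) * int y ^ 2 = 2 * int z ^ 2 \<and>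
      gcd x y = 1 \<and>
      real (max a b * max x y) \<le> B}"

definition Fm :: "nat \<Rightarrow> nat \<Rightarrow> int \<times> int \<Rightarrow> nat \<times> nat \<times> nat" where
  "Fm a b p = (case p of (s, t) \<Rightarrow>
     (nat (- Q1 (int a) (int b) s t div gcd (Q1 (int a) (int b) s t) (Q2 (int a) (int b) s t)),
      nat (- Q2 (int a) (int b) s t div gcd (Q1 (int a) (int b) s t) (Q2 (int a) (int b) s t)),
      nat (- Q3 (int a) (int b) s t div gcd (Q1 (int a) (int b) s t) (Q2 (int a) (int b) s t))))"

lemma Nmem: "((s,t) \<in> N_set a b B) = (gcd s t = 1 \<and> s * (s - int a * t) \<noteq> 0 \<and>
      real_of_int s / real_of_int t \<noteq> (real a ^ 2 - real b ^ 2) / (2 * real a) \<and>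
      t > 0 \<and> 0 < - Q3 (int a) (int b) s t \<and>
        0 < - Q1 (int a) (int b) s t \<and>
        real_of_int (- Q1 (int a) (int b) s t) \<le> real_of_int (gcd (Q1 (int a) (int b) s t) (Q2 (int a) (int b) s t)) * B / real (max a b) \<and>
        0 < - Q2 (int a) (int b) s t \<and>
        real_of_int (- Q2 (int a) (int b) s t) \<le> real_of_int (gcd (Q1 (int a) (int b) s t) (Q2 (int a) (int b) s t)) * B / real (max a b))"
  unfolding N_set_def Let_def by simp

lemma main_bij:
  assumes a: "0 < a" and b: "0 < b" and cab: "coprime a b" and ab: "a * b \<noteq> 1"
  shows "bij_betw (Fm a b) (N_set a b B) (Mset a b B - {(1,1,a)})"
proof -
  define A where "A = int a"
  define Bq where "Bq = int b"
  have A0: "A > 0" using a A_def by simp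
  have M0: "max a b > 0" using a by simp
  have dA: "A^2 - Bq^2 \<noteq> 0"
  proof
    assume "A^2 - Bq^2 = 0"
    hence "A^2 = Bq^2" by simp
    hence "a = b" using A_def Bq_def by (simp add: power2_eq_iff_nonneg)
    hence "a = 1" using cab by simp
    thus False using ab \<open>a = b\<close> by simp
  qed
  have fwd: "\<exists>l X Y Z. l > 0 \<and> -Q1 A Bq s t = l*X \<and> -Q2 A Bq s t = l*Y \<and> -Q3 A Bq s t = l*Z
     \<and> l = gcd (Q1 A Bq s t) (Q2 A Bq s t) \<and> Fm a b (s,t) = (nat X, nat Y, nat Z) \<and> X \<noteq> Y
     \<and> Fm a b (s,t) \<in> Mset a b B - {(1,1,a)}"
    if st: "(s,t) \<in> N_set a b B" for s t
  proof -
    note st' = st[unfolded Nmem, folded A_def Bq_def]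
    define l where "l = gcd (Q1 A Bq s t) (Q2 A Bq s t)"
    define X where "X = - Q1 A Bq s t div l"
    define Y where "Y = - Q2 A Bq s t div l"
    define Z where "Z = - Q3 A Bq s t div l"
    have fc: "l > 0 \<and> - Q1 A Bq s t = l * X \<and> - Q2 A Bq s t = l * Y
     \<and> - Q3 A Bq s t = l * Z \<and> coprime X Y \<and> X > 0 \<and> Y > 0 \<and> Z > 0
     \<and> (A^2-Bq^2)*X^2 + (A^2+Bq^2)*Y^2 = 2*Z^2"
      unfolding l_def X_def Y_def Z_def by (rule fwd_core) (use st' in auto)
    have Fe: "Fm a b (s,t) = (nat X, nat Y, nat Z)"
      unfolding Fm_def X_def Y_def Z_def l_def A_def Bq_def by simp
    have XY: "X \<noteq> Y"
    proof
      assume "X = Y"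
      hence "Q1 A Bq s t - Q2 A Bq s t = 0" using fc by (metis add.inverse_inverse diff_self)
      hence "4*s*(s-A*t) = 0" using id12[of A Bq s t] by simp
      thus False using st' by simp
    qed
    have inM: "(nat X, nat Y, nat Z) \<in> Mset a b B"
    proof -
      have ix: "int (nat X) = X" "int (nat Y) = Y" "int (nat Z) = Z" using fc by simp_all
      have g1: "gcd (nat X) (nat Y) = 1"
      proof -
        have "int (gcd (nat X) (nat Y)) = gcd X Y" using ix by (metis gcd_int_int_eq)
        also have "\<dots> = 1" using fc by simp
        finally show ?thesis by simp
      qed
      have "real (max a b) * real_of_int X \<le> B"
        using st' fc bnd[of l "max a b" X B] M0 l_def by simp
      hence bx: "real (max a b) * real (nat X) \<le> B" using ix by (metis of_int_of_nat_eq)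
      have "real (max a b) * real_of_int Y \<le> B"
        using st' fc bnd[of l "max a b" Y B] M0 l_def by simp
      hence by': "real (max a b) * real (nat Y) \<le> B" using ix by (metis of_int_of_nat_eq)
      have "real (max a b * max (nat X) (nat Y)) \<le> B" using bx by' by (simp only: bnd2)
      thus ?thesis unfolding Mset_def using fc ix g1 A_def Bq_def by auto
    qed
    have ne: "(nat X, nat Y, nat Z) \<noteq> (1,1,a)"
    proof
      assume "(nat X, nat Y, nat Z) = (1,1,a)"
      hence "X = Y" using fc by auto
      thus False using XY by simp
    qed
    show ?thesis
      apply (rule exI[of _ l], rule exI[of _ X], rule exI[of _ Y], rule exI[of _ Z])
      using fc Fe XY inM l_def ne by simp
  qed
  have inj: "inj_on (Fm a b) (N_set a b B)"
  proof (rule inj_onI)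
    fix p p' assume p: "p \<in> N_set a b B" and p': "p' \<in> N_set a b B" and eq: "Fm a b p = Fm a b p'"
    obtain s t where st: "p = (s,t)" by (cases p)
    obtain s' t' where st2: "p' = (s',t')" by (cases p')
    note N1 = p[unfolded st Nmem, folded A_def Bq_def]
    note N2 = p'[unfolded st2 Nmem, folded A_def Bq_def]
    obtain l X Y Z where f1: "l > 0" "-Q1 A Bq s t = l*X" "-Q2 A Bq s t = l*Y" "-Q3 A Bq s t = l*Z"
      "Fm a b (s,t) = (nat X, nat Y, nat Z)" "X \<noteq> Y"
      using fwd[of s t] p st by blast
    obtain l' X' Y' Z' where f2: "l' > 0" "-Q1 A Bq s' t' = l'*X'" "-Q2 A Bq s' t' = l'*Y'" "-Q3 A Bq s' t' = l'*Z'"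
      "Fm a b (s',t') = (nat X', nat Y', nat Z')"
      using fwd[of s' t'] p' st2 by blast
    have pos: "X > 0" "Y > 0" "Z > 0" "X' > 0" "Y' > 0" "Z' > 0"
    proof -
      have "0 < l*X" "0 < l*Y" "0 < l*Z" "0 < l'*X'" "0 < l'*Y'" "0 < l'*Z'" using f1 f2 N1 N2 by linarith+
      thus "X > 0" "Y > 0" "Z > 0" "X' > 0" "Y' > 0" "Z' > 0" using f1 f2 by (simp_all add: zero_less_mult_iff)
    qed
    have "nat X = nat X'" "nat Y = nat Y'" "nat Z = nat Z'" using eq f1 f2 st st2 by auto
    hence ee: "X = X'" "Y = Y'" "Z = Z'" using pos by simp_all
    have "s = s' \<and> t = t'"
      apply (rule inj_core[of A Bq s t s' t' l X Y Z l'])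
      using dA N1 N2 f1 f2 ee by (simp_all add: coprime_iff_gcd_eq_1)
    thus "p = p'" using st st2 by simp
  qed
  have img1: "Fm a b ` N_set a b B \<subseteq> Mset a b B - {(1,1,a)}"
  proof (rule image_subsetI)
    fix p assume p: "p \<in> N_set a b B"
    obtain s t where st: "p = (s,t)" by (cases p)
    show "Fm a b p \<in> Mset a b B - {(1,1,a)}" using fwd[of s t] p st by blast
  qed
  have img2: "Mset a b B - {(1,1,a)} \<subseteq> Fm a b ` N_set a b B"
  proof
    fix q assume q: "q \<in> Mset a b B - {(1,1,a)}"
    obtain x y z where qe: "q = (x,y,z)" by (cases q)
    have mq: "0 < x" "0 < y" "0 < z"
      "(A ^ 2 - Bq ^ 2) * int x ^ 2 + (A ^ 2 + Bq ^ 2) * int y ^ 2 = 2 * int z ^ 2"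
      "gcd x y = 1" "real (max a b * max x y) \<le> B" "(x,y,z) \<noteq> (1,1,a)"
      using q qe unfolding Mset_def A_def Bq_def by auto
    have xy: "x \<noteq> y"
    proof
      assume "x = y"
      hence x1: "x = 1" "y = 1" using mq by auto
      hence "2 * int z ^ 2 = 2 * A^2" using mq(4) by simp
      hence "int z ^ 2 = A^2" by simp
      hence "int z = A" using A0 by (simp add: power2_eq_iff_nonneg)
      hence "z = a" using A_def by simp
      thus False using mq x1 by simp
    qed
    have copXY: "coprime (int x) (int y)" using mq by (simp add: coprime_iff_gcd_eq_1 gcd_int_int_eq)
    have "\<exists>s t m. coprime s t \<and> t > 0 \<and> m > 0 \<and> - Q1 A Bq s t = m*int x \<and> - Q2 A Bq s t = m*int y
      \<and> - Q3 A Bq s t = m*int z"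
      by (rule bwd_core[OF A0 dA _ _ _ copXY _ mq(4)]) (use mq xy in simp_all)
    then obtain s t m where w: "coprime s t" "t > 0" "m > 0" "- Q1 A Bq s t = m*int x" "- Q2 A Bq s t = m*int y"
      "- Q3 A Bq s t = m*int z" by blast
    have lam: "gcd (Q1 A Bq s t) (Q2 A Bq s t) = m"
    proof -
      have "gcd (Q1 A Bq s t) (Q2 A Bq s t) = gcd (- Q1 A Bq s t) (- Q2 A Bq s t)" by simp
      also have "\<dots> = gcd (m * int x) (m * int y)" using w by simp
      also have "\<dots> = \<bar>m\<bar> * gcd (int x) (int y)" by (rule gcd_mult_distrib_int[symmetric])
      also have "\<dots> = m" using w copXY by simp
      finally show ?thesis .
    qed
    have c1: "s * (s - A * t) \<noteq> 0"
    proof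
      assume "s * (s - A * t) = 0"
      hence "Q1 A Bq s t - Q2 A Bq s t = 0" using id12[of A Bq s t] by simp
      hence "m * int x = m * int y" using w by linarith
      thus False using w xy by simp
    qed
    have c2: "real_of_int s / real_of_int t \<noteq> (real a ^ 2 - real b ^ 2) / (2 * real a)"
    proof
      assume h: "real_of_int s / real_of_int t = (real a ^ 2 - real b ^ 2) / (2 * real a)"
      have "real_of_int (2*A*s) = real_of_int ((A^2-Bq^2)*t)"
        using h w a unfolding A_def Bq_def by (simp add: field_simps)
      hence "2*A*s = (A^2-Bq^2)*t" by (rule of_int_eq_iff[THEN iffD1])
      hence "Q1 A Bq s t + Q2 A Bq s t = 0" using id12p[of A Bq s t] by simp
      hence "m * int x + m * int y = 0" using w by linarith
      moreover have "m * int x > 0" "m * int y > 0" using w mq by simp_all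
      ultimately show False by linarith
    qed
    have bxy: "real (max a b) * real x \<le> B" "real (max a b) * real y \<le> B" using mq(6) by (simp_all only: bnd2)
    have inN: "(s,t) \<in> N_set a b B"
      unfolding Nmem A_def[symmetric] Bq_def[symmetric] lam
      using w c1 c2 bxy bnd[of m "max a b" "int x" B] bnd[of m "max a b" "int y" B] M0 mq
      by (simp add: coprime_iff_gcd_eq_1 zero_less_mult_iff)
    have "Fm a b (s,t) = q"
      unfolding Fm_def A_def[symmetric] Bq_def[symmetric] qe using w by (simp add: lam)
    thus "q \<in> Fm a b ` N_set a b B" using inN by force
  qed
  show ?thesis unfolding bij_betw_def using inj img1 img2 by blast
qed

theorem lemma5p1:
  shows "\<exists>C::real. \<forall>(a::nat) (b::nat) (B::real).
           0 < a \<longrightarrow> 0 < b \<longrightarrow> coprime a b \<longrightarrow> a * b \<noteq> 1 \<longrightarrow> 1 \<le> B \<longrightarrow>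
           \<bar>real (M_count a b B) - real (card (N_set a b B))\<bar> \<le> C"
proof (intro exI[of _ 1] allI impI)
  fix a b :: nat and B :: real
  assume "0 < a" "0 < b" "coprime a b" "a * b \<noteq> 1" "1 \<le> B"
  hence "card (N_set a b B) = card (Mset a b B - {(1,1,a)})"
    using main_bij bij_betw_same_card by blast
  moreover have "M_count a b B = card (Mset a b B)" unfolding M_count_def Mset_def by simp
  ultimately show "\<bar>real (M_count a b B) - real (card (N_set a b B))\<bar> \<le> 1"
    using card_diff1 by simp
qed

end
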